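(* Let $\lambda>0$, let $\mathbf r_\lambda=(\mathbf r_{1\lambda},\dots,\mathbf r_{N\lambda})\in\mathfrak R$ be any point at which $f+\lambda g$ attains its minimum over $\mathfrak R$, write $\mathbf r_{i\lambda}=|\mathbf r_{i\lambda}|(\cos\varphi_{i\lambda},\sin\varphi_{i\lambda})$, put $\omega=\sqrt{2\lambda}$ and let $\mathbf r_\lambda(t)=(\mathbf r_{1\lambda}(t),\dots,\mathbf r_{N\lambda}(t))$ with $\mathbf r_{i\lambda}(t)=|\mathbf r_{i\lambda}|(\cos(\varphi_{i\lambda}+\omega t),\sin(\varphi_{i\lambda}+\omega t))$, $t\ge0$. Then this trajectory is stationary and periodic, and for every $t\ge 0$ and $i=1,\dots,N$, $$\frac{\partial f}{\partial \mathbf r_i}[\mathbf r_\lambda(t)]=-\lambda\frac{\partial g}{\partial \mathbf r_i}[\mathbf r_\lambda(t)],\qquad \mathbf F_i[\mathbf r_\lambda(t)]=-2\lambda m_i\mathbf r_{i\lambda}(t).$$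
   Context: Fix $N\ge 2$, masses $m_1,\dots,m_N>0$ and $\gamma>0$. Planar configuration space $\mathfrak R=\{\mathbf r=(\mathbf r_1,\dots,\mathbf r_N)\in(\mathbb R^2)^N:\ \mathbf r_i\neq\mathbf r_j \text{ for } i\neq j\}$; $f(\mathbf r)=\sum_{i<j}\frac{\gamma m_im_j}{|\mathbf r_j-\mathbf r_i|}$, $g(\mathbf r)=\sum_i m_i|\mathbf r_i|^2$; $\mathbf F_i(\mathbf r)=\sum_{j\ne i}\frac{\gamma m_im_j(\mathbf r_j-\mathbf r_i)}{|\mathbf r_j-\mathbf r_i|^3}$. For every $\lambda>0$, $f+\lambda g$ attains its minimum on $\mathfrak R$. A curve $\mathbf r(t)$, $t\ge0$, in $\mathfrak R$ is called stationary if there are constants $0<C_1\le C_2<\infty$ with $C_1\le|\mathbf r_j(t)-\mathbf r_i(t)|\le C_2$ for all $i\ne j$ and $t\ge0$. *)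

theory Defs
  imports "HOL-Analysis.Analysis"
begin

text \<open>Bodies are indexed by 0..N-1 (i.e. i < N). A configuration is a map
  nat => real^2; only the values at indices below N matter.\<close>

definition config_space :: "nat \<Rightarrow> (nat \<Rightarrow> real^2) set" where
  "config_space N = {r. \<forall>i<N. \<forall>j<N. i \<noteq> j \<longrightarrow> r i \<noteq> r j}"

definition fpot :: "real \<Rightarrow> (nat \<Rightarrow> real) \<Rightarrow> nat \<Rightarrow> (nat \<Rightarrow> real^2) \<Rightarrow> real" where
  "fpot \<gamma> m N r = (\<Sum>j<N. \<Sum>i<j. \<gamma> * m i * m j / norm (r j - r i))"

definition gmom :: "(nat \<Rightarrow> real) \<Rightarrow> nat \<Rightarrow> (nat \<Rightarrow> real^2) \<Rightarrow> real" where
  "gmom m N r = (\<Sum>i<N. m i * (norm (r i))\<^sup>2)"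

definition force :: "real \<Rightarrow> (nat \<Rightarrow> real) \<Rightarrow> nat \<Rightarrow> (nat \<Rightarrow> real^2) \<Rightarrow> nat \<Rightarrow> real^2" where
  "force \<gamma> m N r i =
     (\<Sum>j\<in>{..<N} - {i}. (\<gamma> * m i * m j / (norm (r j - r i))^3) *\<^sub>R (r j - r i))"

definition stationary :: "nat \<Rightarrow> (real \<Rightarrow> nat \<Rightarrow> real^2) \<Rightarrow> bool" where
  "stationary N c \<longleftrightarrow> (\<forall>t\<ge>0. c t \<in> config_space N) \<and>
     (\<exists>C1 C2. 0 < C1 \<and> C1 \<le> C2 \<and>
        (\<forall>t\<ge>0. \<forall>i<N. \<forall>j<N. i \<noteq> j \<longrightarrow>
            C1 \<le> norm (c t j - c t i) \<and> norm (c t j - c t i) \<le> C2))"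

definition periodic_curve :: "nat \<Rightarrow> (real \<Rightarrow> nat \<Rightarrow> real^2) \<Rightarrow> bool" where
  "periodic_curve N c \<longleftrightarrow> (\<exists>T>0. \<forall>t\<ge>0. \<forall>i<N. c (t + T) i = c t i)"

end

theory Submission
  imports Defs
begin

definition rot :: "real \<Rightarrow> real^2 \<Rightarrow> real^2" where
  "rot \<theta> v = vector [cos \<theta> * v$1 - sin \<theta> * v$2, sin \<theta> * v$1 + cos \<theta> * v$2]"

lemma norm2_eq: "norm (v::real^2) = sqrt ((v$1)\<^sup>2 + (v$2)\<^sup>2)"
  by (simp add: norm_eq_sqrt_inner inner_vec_def sum_2 power2_eq_square)

lemma rot_diff: "rot \<theta> (a - b) = rot \<theta> a - rot \<theta> b"
  unfolding rot_def by (simp add: vec_eq_iff forall_2 algebra_simps)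

lemma norm_rot: "norm (rot \<theta> v) = norm v"
proof -
  have a: "(a * x - b * y)\<^sup>2 + (b * x + a * y)\<^sup>2 = (b\<^sup>2 + a\<^sup>2) * (x\<^sup>2 + y\<^sup>2)" for a b x y :: real
    by algebra
  have "(cos \<theta> * v$1 - sin \<theta> * v$2)\<^sup>2 + (sin \<theta> * v$1 + cos \<theta> * v$2)\<^sup>2
      = ((sin \<theta>)\<^sup>2 + (cos \<theta>)\<^sup>2) * ((v$1)\<^sup>2 + (v$2)\<^sup>2)"
    by (rule a)
  then show ?thesis unfolding norm2_eq rot_def by simp
qed

lemma rot_polar: "rot \<theta> (c *\<^sub>R vector [cos \<phi>, sin \<phi>]) = c *\<^sub>R vector [cos (\<phi> + \<theta>), sin (\<phi> + \<theta>)]"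
  unfolding rot_def by (simp add: vec_eq_iff forall_2 cos_add sin_add algebra_simps)

lemma pair_split:
  fixes T :: "nat \<Rightarrow> nat \<Rightarrow> real"
  shows "i < N \<Longrightarrow> (\<Sum>j<N. \<Sum>k<j. T k j) = (\<Sum>j<N. \<Sum>k<j. if k = i \<or> j = i then 0 else T k j)
     + (\<Sum>l\<in>{..<N}-{i}. if l < i then T l i else T i l)"
proof (induction N)
  case 0 then show ?case by simp
next
  case (Suc n)
  show ?case
  proof (cases "i < n")
    case True
    have e: "{..<Suc n} - {i} = insert n ({..<n} - {i})" using True by auto
    have s: "(\<Sum>k<n. T k n) = (\<Sum>k<n. if k = i \<or> n = i then 0 else T k n) + T i n"
    proof -
      have "(\<Sum>k<n. T k n) = (\<Sum>k<n. (if k = i then 0 else T k n) + (if k = i then T i n else 0))"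
        by (rule sum.cong) auto
      also have "\<dots> = (\<Sum>k<n. if k = i \<or> n = i then 0 else T k n) + T i n"
        using True by (simp add: sum.distrib)
      finally show ?thesis .
    qed
    show ?thesis using Suc.IH[OF True] True s by (simp add: e)
  next
    case False
    then have i: "i = n" using Suc.prems by simp
    have e: "{..<Suc n} - {n} = {..<n}" by auto
    have z: "(\<Sum>j<n. \<Sum>k<j. if k = i \<or> j = i then 0 else T k j) = (\<Sum>j<n. \<Sum>k<j. T k j)"
      using i by (intro sum.cong) auto
    have z2: "(\<Sum>l<n. if l < i then T l i else T i l) = (\<Sum>l<n. T l n)"
      using i by (intro sum.cong) auto
    show ?thesis using i z z2 by (simp add: e)
  qed
qed

lemma GDERIV_sum:
  assumes "finite A" "\<And>a. a \<in> A \<Longrightarrow> GDERIV (f a) x :> D a"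
  shows "GDERIV (\<lambda>x. \<Sum>a\<in>A. f a x) x :> (\<Sum>a\<in>A. D a)"
  using assms unfolding gderiv_def
  by (auto intro!: has_derivative_sum simp: inner_sum_right)

lemma gderiv_inv_dist:
  fixes a x0 :: "'a::real_inner"
  assumes "a \<noteq> x0"
  shows "GDERIV (\<lambda>x. c / norm (a - x)) x0 :> (c / norm (a - x0)^3) *\<^sub>R (a - x0)"
proof -
  have n: "norm (a - x0) \<noteq> 0" using assms by simp
  have d0: "((\<lambda>x. a - x) has_derivative (\<lambda>h. - h)) (at x0)"
    by (auto intro!: derivative_eq_intros)
  have d1: "((\<lambda>x. norm (a - x)) has_derivative (\<lambda>h. inner (- h) (sgn (a - x0)))) (at x0)"
    using has_derivative_compose[OF d0 has_derivative_norm[of "a - x0"]] assms by simp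
  have "GDERIV (\<lambda>x. norm (a - x)) x0 :> - sgn (a - x0)"
    unfolding gderiv_def using d1 by simp
  from GDERIV_mult[OF GDERIV_const[of c] GDERIV_inverse[OF this n]]
  have g: "GDERIV (\<lambda>x. c * inverse (norm (a - x))) x0 :> c *\<^sub>R (- (inverse (norm (a - x0)))\<^sup>2 *\<^sub>R - sgn (a - x0)) + inverse (norm (a - x0)) *\<^sub>R 0" .
  have f: "(\<lambda>x. c / norm (a - x)) = (\<lambda>x. c * inverse (norm (a - x)))"
    by (simp add: divide_inverse)
  have e: "c *\<^sub>R (- (inverse (norm (a - x0)))\<^sup>2 *\<^sub>R - sgn (a - x0)) + inverse (norm (a - x0)) *\<^sub>R 0
     = (c / norm (a - x0)^3) *\<^sub>R (a - x0)"
    using n by (simp add: sgn_div_norm power2_eq_square power3_eq_cube field_simps)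
  show ?thesis unfolding f using g e by simp
qed


lemma fpot_upd:
  assumes "i < N"
  shows "\<exists>Z. \<forall>x. fpot \<gamma> m N (s(i:=x)) = Z + (\<Sum>l\<in>{..<N}-{i}. \<gamma> * m i * m l / norm (s l - x))"
proof (intro exI allI)
  fix x
  let ?s = "s(i:=x)"
  have "fpot \<gamma> m N ?s = (\<Sum>j<N. \<Sum>k<j. if k = i \<or> j = i then 0 else \<gamma> * m k * m j / norm (?s j - ?s k))
     + (\<Sum>l\<in>{..<N}-{i}. if l < i then \<gamma> * m l * m i / norm (?s i - ?s l) else \<gamma> * m i * m l / norm (?s l - ?s i))"
    unfolding fpot_def by (rule pair_split[OF assms])
  also have "(\<Sum>j<N. \<Sum>k<j. if k = i \<or> j = i then 0 else \<gamma> * m k * m j / norm (?s j - ?s k))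
     = (\<Sum>j<N. \<Sum>k<j. if k = i \<or> j = i then 0 else \<gamma> * m k * m j / norm (s j - s k))"
    by (intro sum.cong) auto
  also have "(\<Sum>l\<in>{..<N}-{i}. if l < i then \<gamma> * m l * m i / norm (?s i - ?s l) else \<gamma> * m i * m l / norm (?s l - ?s i))
     = (\<Sum>l\<in>{..<N}-{i}. \<gamma> * m i * m l / norm (s l - x))"
    by (intro sum.cong) (auto simp: norm_minus_commute mult_ac)
  finally show "fpot \<gamma> m N ?s = (\<Sum>j<N. \<Sum>k<j. if k = i \<or> j = i then 0 else \<gamma> * m k * m j / norm (s j - s k))
     + (\<Sum>l\<in>{..<N}-{i}. \<gamma> * m i * m l / norm (s l - x))" .
qed

lemma fpot_gderiv:
  assumes "s \<in> config_space N" "i < N"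
  shows "GDERIV (\<lambda>x. fpot \<gamma> m N (s(i:=x))) (s i) :> force \<gamma> m N s i"
proof -
  obtain Z where Z: "\<And>x. fpot \<gamma> m N (s(i:=x)) = Z + (\<Sum>l\<in>{..<N}-{i}. \<gamma> * m i * m l / norm (s l - x))"
    using fpot_upd[OF assms(2)] by blast
  have "GDERIV (\<lambda>x. Z + (\<Sum>l\<in>{..<N}-{i}. \<gamma> * m i * m l / norm (s l - x))) (s i)
     :> 0 + (\<Sum>l\<in>{..<N}-{i}. (\<gamma> * m i * m l / norm (s l - s i)^3) *\<^sub>R (s l - s i))"
  proof (rule GDERIV_add[OF GDERIV_const], rule GDERIV_sum)
    fix l assume "l \<in> {..<N}-{i}"
    then have "s l \<noteq> s i" using assms unfolding config_space_def by auto
    then show "GDERIV (\<lambda>x. \<gamma> * m i * m l / norm (s l - x)) (s i) :> (\<gamma> * m i * m l / norm (s l - s i)^3) *\<^sub>R (s l - s i)"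
      by (rule gderiv_inv_dist)
  qed simp
  then show ?thesis unfolding Z force_def by simp
qed

lemma gmom_gderiv:
  assumes "i < N"
  shows "GDERIV (\<lambda>x. gmom m N (s(i:=x))) (s i) :> (2 * m i) *\<^sub>R s i"
proof -
  have Z: "gmom m N (s(i:=x)) = (\<Sum>k\<in>{..<N}-{i}. m k * (norm (s k))\<^sup>2) + m i * (x \<bullet> x)" for x
  proof -
    have "gmom m N (s(i:=x)) = m i * (norm x)\<^sup>2 + (\<Sum>k\<in>{..<N}-{i}. m k * (norm ((s(i:=x)) k))\<^sup>2)"
      unfolding gmom_def using assms by (subst sum.remove[of _ i]) auto
    also have "(\<Sum>k\<in>{..<N}-{i}. m k * (norm ((s(i:=x)) k))\<^sup>2) = (\<Sum>k\<in>{..<N}-{i}. m k * (norm (s k))\<^sup>2)"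
      by (intro sum.cong) auto
    finally show ?thesis unfolding power2_norm_eq_inner by (simp only: add.commute)
  qed
  have d: "((\<lambda>x. m i * (x \<bullet> x)) has_derivative (\<lambda>h. h \<bullet> ((2 * m i) *\<^sub>R s i))) (at (s i))"
    by (auto intro!: derivative_eq_intros simp: inner_commute algebra_simps)
  have "GDERIV (\<lambda>x. (\<Sum>k\<in>{..<N}-{i}. m k * (norm (s k))\<^sup>2) + m i * (x \<bullet> x)) (s i) :> 0 + (2 * m i) *\<^sub>R s i"
    by (rule GDERIV_add[OF GDERIV_const]) (use d in \<open>simp add: gderiv_def\<close>)
  then show ?thesis unfolding Z by simp
qed


lemma crit:
  assumes cs: "s \<in> config_space N" and i: "i < N"
    and mn: "\<forall>s'\<in>config_space N. fpot \<gamma> m N s + lam * gmom m N s \<le> fpot \<gamma> m N s' + lam * gmom m N s'"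
  shows "force \<gamma> m N s i = - lam *\<^sub>R ((2 * m i) *\<^sub>R s i)"
proof -
  define h where "h = (\<lambda>x. fpot \<gamma> m N (s(i:=x)) + lam * gmom m N (s(i:=x)))"
  define V where "V = force \<gamma> m N s i + lam *\<^sub>R ((2 * m i) *\<^sub>R s i)"
  have "GDERIV h (s i) :> force \<gamma> m N s i + (lam *\<^sub>R ((2 * m i) *\<^sub>R s i) + gmom m N (s(i:= s i)) *\<^sub>R 0)"
    unfolding h_def
    by (rule GDERIV_add[OF fpot_gderiv[OF cs i, of \<gamma> m] GDERIV_mult[OF GDERIV_const[of lam] gmom_gderiv[OF i, of m s]]])
  then have D: "(h has_derivative (\<lambda>v. v \<bullet> V)) (at (s i))"
    unfolding V_def gderiv_def by simp
  define U where "U = - (s ` ({..<N}-{i}))"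
  have oU: "open U" unfolding U_def by (intro open_Compl finite_imp_closed) auto
  have siU: "s i \<in> U" using cs i unfolding U_def config_space_def by auto
  have "h (s i) \<le> h y" if "y \<in> U" for y
  proof -
    have "s(i:=y) \<in> config_space N"
      using cs that unfolding U_def config_space_def by (auto simp: image_iff)
    then show ?thesis using mn unfolding h_def by simp
  qed
  then have ev: "eventually (\<lambda>y. h (s i) \<le> h y) (at (s i))"
    unfolding eventually_at_topological using oU siU by blast
  have "(\<lambda>v. v \<bullet> V) = (\<lambda>v. 0)" by (rule has_derivative_local_min[OF D ev])
  then have "V \<bullet> V = 0" by metis
  then have "V = 0" by simp
  then show ?thesis unfolding V_def by (simp add: eq_neg_iff_add_eq_0)
qed

theorem theorem3p2:
  fixes N :: nat and m :: "nat \<Rightarrow> real" and \<gamma> lam :: real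
    and r :: "nat \<Rightarrow> real^2" and \<phi> :: "nat \<Rightarrow> real"
  assumes "N \<ge> 2" and "\<forall>i<N. m i > 0" and "\<gamma> > 0" and "lam > 0"
    and "r \<in> config_space N"
    and "\<forall>s\<in>config_space N. fpot \<gamma> m N r + lam * gmom m N r \<le> fpot \<gamma> m N s + lam * gmom m N s"
    and "\<forall>i<N. r i = norm (r i) *\<^sub>R vector [cos (\<phi> i), sin (\<phi> i)]"
  defines "rt \<equiv> (\<lambda>t i. norm (r i) *\<^sub>R vector [cos (\<phi> i + sqrt (2 * lam) * t), sin (\<phi> i + sqrt (2 * lam) * t)])"
  shows "stationary N rt \<and> periodic_curve N rt \<and>
    (\<forall>t\<ge>0. \<forall>i<N.
       (\<exists>Df Dg. GDERIV (\<lambda>x. fpot \<gamma> m N ((rt t)(i := x))) (rt t i) :> Df \<and>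
                GDERIV (\<lambda>x. gmom m N ((rt t)(i := x))) (rt t i) :> Dg \<and>
                Df = - lam *\<^sub>R Dg) \<and>
       force \<gamma> m N (rt t) i = - (2 * lam * m i) *\<^sub>R rt t i)"
proof -
  define \<omega> where "\<omega> = sqrt (2 * lam)"
  have wpos: "\<omega> > 0" unfolding \<omega>_def using assms(4) by simp
  have rt_rot: "rt t i = rot (\<omega> * t) (r i)" if "i < N" for t i
  proof -
    have e: "r i = norm (r i) *\<^sub>R vector [cos (\<phi> i), sin (\<phi> i)]" using assms(7) that by blast
    have "rot (\<omega> * t) (r i) = norm (r i) *\<^sub>R vector [cos (\<phi> i + \<omega> * t), sin (\<phi> i + \<omega> * t)]"
      by (subst e) (rule rot_polar)
    then show ?thesis unfolding rt_def \<omega>_def by simp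
  qed
  have dist: "norm (rt t j - rt t i) = norm (r j - r i)" if "i < N" "j < N" for t i j
    using that by (simp add: rt_rot rot_diff[symmetric] norm_rot)
  have nrm: "norm (rt t i) = norm (r i)" if "i < N" for t i
    using that by (simp add: rt_rot norm_rot)
  have csr: "r i \<noteq> r j" if "i < N" "j < N" "i \<noteq> j" for i j
    using assms(5) that unfolding config_space_def by auto
  have cs: "rt t \<in> config_space N" for t
    unfolding config_space_def using dist csr by (auto simp del: norm_eq_zero) (metis dist eq_iff_diff_eq_0 norm_eq_zero)
  have fp: "fpot \<gamma> m N (rt t) = fpot \<gamma> m N r" for t
    unfolding fpot_def by (intro sum.cong refl) (simp add: dist)
  have gm: "gmom m N (rt t) = gmom m N r" for t
    unfolding gmom_def by (intro sum.cong refl) (simp add: nrm)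
  have mn: "\<forall>s'\<in>config_space N. fpot \<gamma> m N (rt t) + lam * gmom m N (rt t) \<le> fpot \<gamma> m N s' + lam * gmom m N s'" for t
    using assms(6) by (simp add: fp gm)
  define P where "P = {p \<in> {..<N} \<times> {..<N}. fst p \<noteq> snd p}"
  define D where "D = (\<lambda>p. norm (r (snd p) - r (fst p))) ` P"
  have finD: "finite D" unfolding D_def P_def by auto
  have neD: "D \<noteq> {}" unfolding D_def P_def using assms(1) by auto (metis One_nat_def Suc_le_eq less_le_trans one_less_numeral_iff pos2 semiring_norm(76) zero_neq_one)
  have Dpos: "\<forall>d\<in>D. d > 0" unfolding D_def P_def using csr by auto
  have inD: "norm (r j - r i) \<in> D" if "i < N" "j < N" "i \<noteq> j" for i j
    unfolding D_def P_def using that by (auto intro!: image_eqI[of _ _ "(i,j)"])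
  have stat: "stationary N rt"
  proof -
    have h1: "0 < Min D" using finD neD Dpos by simp
    have h2: "Min D \<le> Max D" using finD neD by (meson Max_ge Min_le ex_in_conv order_trans)
    have h3: "\<forall>t\<ge>0. \<forall>i<N. \<forall>j<N. i \<noteq> j \<longrightarrow> Min D \<le> norm (rt t j - rt t i) \<and> norm (rt t j - rt t i) \<le> Max D"
      using inD finD dist by (metis Max_ge Min_le)
    have h4: "\<forall>t\<ge>0. rt t \<in> config_space N" using cs by blast
    show ?thesis unfolding stationary_def using h1 h2 h3 h4 by (intro conjI exI[of _ "Min D"] exI[of _ "Max D"]) assumption+
  qed
  have per: "periodic_curve N rt"
    unfolding periodic_curve_def
  proof (intro exI[of _ "2 * pi / \<omega>"] conjI allI impI)
    show "0 < 2 * pi / \<omega>" using wpos by simp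
    fix t :: real and i assume "0 \<le> t" "i < N"
    have "\<phi> i + \<omega> * (t + 2 * pi / \<omega>) = (\<phi> i + \<omega> * t) + 2 * pi"
      using wpos by (simp add: field_simps)
    then show "rt (t + 2 * pi / \<omega>) i = rt t i"
      unfolding rt_def \<omega>_def[symmetric] by (simp add: add.assoc[symmetric])
  qed
  show ?thesis
  proof (intro conjI stat per allI impI)
    fix t :: real and i assume "0 \<le> t" "i < N"
    have F: "force \<gamma> m N (rt t) i = - lam *\<^sub>R ((2 * m i) *\<^sub>R rt t i)"
      by (rule crit[OF cs \<open>i < N\<close> mn])
    show "\<exists>Df Dg. GDERIV (\<lambda>x. fpot \<gamma> m N ((rt t)(i := x))) (rt t i) :> Df \<and>
                GDERIV (\<lambda>x. gmom m N ((rt t)(i := x))) (rt t i) :> Dg \<and>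
                Df = - lam *\<^sub>R Dg"
      using fpot_gderiv[OF cs \<open>i < N\<close>] gmom_gderiv[OF \<open>i < N\<close>] F by blast
    show "force \<gamma> m N (rt t) i = - (2 * lam * m i) *\<^sub>R rt t i"
      using F by simp
  qed
qed

end
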